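(* Let $R=\mathbb{Z}$ or $\mathbb{Z}[i]$, $1\leq k<n$, and let $A_0=(a_1|\dots|a_k)\in R^{n\times k}$ be a $k$-icube of norm $\lambda$ with $a_1$ primitive. Let $b_{k+1},\dots,b_n$ be an $R$-basis of $\Lambda=\{w\in R^n: a_j^*w=0,\ 1\leq j\leq k\}$ and $B=(a_1|\dots|a_k|b_{k+1}|\dots|b_n)$. Let $a=(\alpha_1,\dots,\alpha_n)^T$ with $\alpha_j=\overline{(-1)^{j+1}\det B_{j,1}}$, where $B_{j,1}$ is the matrix obtained from $B$ by deleting row $j$ and column $1$. Then $\overline{\det B}/\lambda\in R$ and $a=(\overline{\det B}/\lambda)\,a_1$.
   Context: A $k$-icube of norm $\lambda>0$ in $R^n$ is $(v_1|\dots|v_k)\in R^{n\times k}$ with $v_i^*v_j=\lambda$ if $i=j$ and $0$ otherwise. A vector is primitive if its entries have no common non-unit divisor in $R$. *)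

theory Defs
  imports Complex_Main "Jordan_Normal_Form.Determinant"
begin

definition rational_integers :: "complex set" where
  "rational_integers = {z. \<exists>m::int. z = of_int m}"

definition gaussian_integers :: "complex set" where
  "gaussian_integers = {z. \<exists>m l::int. z = of_int m + \<i> * of_int l}"

definition cinner :: "complex vec \<Rightarrow> complex vec \<Rightarrow> complex" where
  "cinner v w = (\<Sum>i<dim_vec v. cnj (v $ i) * w $ i)"

definition vec_in :: "complex set \<Rightarrow> nat \<Rightarrow> complex vec \<Rightarrow> bool" where
  "vec_in R n v \<longleftrightarrow> dim_vec v = n \<and> (\<forall>i<n. v $ i \<in> R)"

definition icube :: "complex set \<Rightarrow> nat \<Rightarrow> nat \<Rightarrow> real \<Rightarrow> complex mat \<Rightarrow> bool" where
  "icube R n k lam A \<longleftrightarrow> lam > 0 \<and> A \<in> carrier_mat n k \<and> (\<forall>i<n. \<forall>j<k. A $$ (i,j) \<in> R) \<and>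
     (\<forall>i<k. \<forall>j<k. cinner (col A i) (col A j) = (if i = j then complex_of_real lam else 0))"

definition primitive :: "complex set \<Rightarrow> complex vec \<Rightarrow> bool" where
  "primitive R v \<longleftrightarrow> (\<forall>d\<in>R. (\<forall>i<dim_vec v. \<exists>q\<in>R. v $ i = d * q) \<longrightarrow> (\<exists>u\<in>R. d * u = 1))"

definition orth_lattice :: "complex set \<Rightarrow> nat \<Rightarrow> nat \<Rightarrow> complex mat \<Rightarrow> complex vec set" where
  "orth_lattice R n k A = {w. vec_in R n w \<and> (\<forall>j<k. cinner (col A j) w = 0)}"

definition is_R_basis :: "complex set \<Rightarrow> nat \<Rightarrow> nat set \<Rightarrow> (nat \<Rightarrow> complex vec) \<Rightarrow> complex vec set \<Rightarrow> bool" where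
  "is_R_basis R n I b L \<longleftrightarrow>
     (\<forall>j\<in>I. b j \<in> L) \<and>
     (\<forall>c. (\<forall>j\<in>I. c j \<in> R) \<longrightarrow> finsum_vec TYPE(complex) n (\<lambda>j. c j \<cdot>\<^sub>v b j) I = 0\<^sub>v n \<longrightarrow> (\<forall>j\<in>I. c j = 0)) \<and>
     (\<forall>w\<in>L. \<exists>c. (\<forall>j\<in>I. c j \<in> R) \<and> w = finsum_vec TYPE(complex) n (\<lambda>j. c j \<cdot>\<^sub>v b j) I)"

end

theory Submission imports Defs begin
definition goodR :: "complex set \<Rightarrow> bool" where
  "goodR R \<longleftrightarrow> R = rational_integers \<or> R = gaussian_integers"

lemma gi_iff: "z \<in> gaussian_integers \<longleftrightarrow> Re z \<in> \<int> \<and> Im z \<in> \<int>"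
proof
  assume "z \<in> gaussian_integers"
  then obtain m l :: int where "z = of_int m + \<i> * of_int l" unfolding gaussian_integers_def by blast
  then show "Re z \<in> \<int> \<and> Im z \<in> \<int>" by simp
next
  assume "Re z \<in> \<int> \<and> Im z \<in> \<int>"
  then obtain m l :: int where "Re z = of_int m" "Im z = of_int l" by (metis Ints_cases)
  then have "z = of_int m + \<i> * of_int l" by (simp add: complex_eq_iff)
  then show "z \<in> gaussian_integers" unfolding gaussian_integers_def by blast
qed

lemma ri_iff: "z \<in> rational_integers \<longleftrightarrow> Re z \<in> \<int> \<and> Im z = 0"
proof
  assume "z \<in> rational_integers"
  then obtain m :: int where "z = of_int m" unfolding rational_integers_def by blast
  then show "Re z \<in> \<int> \<and> Im z = 0" by simp
next
  assume "Re z \<in> \<int> \<and> Im z = 0"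
  then obtain m :: int where "Re z = of_int m" "Im z = 0" by (metis Ints_cases)
  then have "z = of_int m" by (simp add: complex_eq_iff)
  then show "z \<in> rational_integers" unfolding rational_integers_def by blast
qed

lemma R_iff: "goodR R \<Longrightarrow> z \<in> R \<longleftrightarrow> Re z \<in> \<int> \<and> Im z \<in> \<int> \<and> (R = rational_integers \<longrightarrow> Im z = 0)"
  unfolding goodR_def using gi_iff ri_iff
  by (metis Ints_0 gi_iff)

lemma R_add: "goodR R \<Longrightarrow> x \<in> R \<Longrightarrow> y \<in> R \<Longrightarrow> x + y \<in> R"
  by (simp add: R_iff)
lemma R_diff: "goodR R \<Longrightarrow> x \<in> R \<Longrightarrow> y \<in> R \<Longrightarrow> x - y \<in> R"
  by (simp add: R_iff)
lemma R_uminus: "goodR R \<Longrightarrow> x \<in> R \<Longrightarrow> - x \<in> R"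
  by (simp add: R_iff)
lemma R_mult: "goodR R \<Longrightarrow> x \<in> R \<Longrightarrow> y \<in> R \<Longrightarrow> x * y \<in> R"
  by (simp add: R_iff)
lemma R_cnj: "goodR R \<Longrightarrow> x \<in> R \<Longrightarrow> cnj x \<in> R"
  by (simp add: R_iff)
lemma R_of_int: "goodR R \<Longrightarrow> of_int m \<in> R"
  by (simp add: R_iff)
lemma R_0: "goodR R \<Longrightarrow> 0 \<in> R" using R_of_int[of R 0] by simp
lemma R_1: "goodR R \<Longrightarrow> 1 \<in> R" using R_of_int[of R 1] by simp
lemma R_pow: "goodR R \<Longrightarrow> x \<in> R \<Longrightarrow> x ^ m \<in> R"
  by (induction m) (auto simp: R_1 R_mult)

lemma R_sum: "goodR R \<Longrightarrow> (\<And>x. x \<in> A \<Longrightarrow> f x \<in> R) \<Longrightarrow> sum f A \<in> R"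
  by (induction A rule: infinite_finite_induct) (auto simp: R_0 R_add)
lemma R_prod: "goodR R \<Longrightarrow> (\<And>x. x \<in> A \<Longrightarrow> f x \<in> R) \<Longrightarrow> prod f A \<in> R"
  by (induction A rule: infinite_finite_induct) (auto simp: R_1 R_mult)

lemma R_det: assumes "goodR R" "\<And>i j. i < dim_row A \<Longrightarrow> j < dim_col A \<Longrightarrow> A $$ (i,j) \<in> R"
  shows "det A \<in> R"
proof -
  have s: "signof p \<in> R" for p :: "nat \<Rightarrow> nat"
    using assms(1) by (simp add: sign_def R_1 R_uminus)
  show ?thesis unfolding det_def
    using assms s
    by (auto intro!: R_sum R_mult R_prod simp: R_0 permutes_def)
qed
definition Nm :: "complex \<Rightarrow> nat" where "Nm d = nat \<lfloor>(Re d)\<^sup>2 + (Im d)\<^sup>2\<rfloor>"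

lemma Nm_less: assumes "goodR R" "r \<in> R" "d \<in> R" "cmod r < cmod d" shows "Nm r < Nm d"
proof -
  obtain a b c e :: int where ab: "Re r = a" "Im r = b" "Re d = c" "Im d = e"
    using assms(1-3) by (metis R_iff Ints_cases)
  have "(cmod r)\<^sup>2 < (cmod d)\<^sup>2" using assms(4) by (simp add: power_strict_mono)
  then have "(Re r)\<^sup>2 + (Im r)\<^sup>2 < (Re d)\<^sup>2 + (Im d)\<^sup>2" by (simp add: cmod_power2)
  then have "a^2 + b^2 < c^2 + e^2" using ab
    by (metis of_int_add of_int_less_iff of_int_power)
  moreover have "Nm r = nat (a^2 + b^2)" unfolding Nm_def using ab
    by (metis floor_of_int of_int_add of_int_power)
  moreover have "Nm d = nat (c^2 + e^2)" unfolding Nm_def using ab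
    by (metis floor_of_int of_int_add of_int_power)
  moreover have "0 \<le> a^2 + b^2" by simp
  ultimately show ?thesis by (metis nat_less_eq_zless)
qed

lemma div_step: assumes "goodR R" "x \<in> R" "d \<in> R" "d \<noteq> 0"
  obtains q where "q \<in> R" "cmod (x - q * d) < cmod d"
proof -
  define z where "z = x / d"
  define q where "q = of_int (round (Re z)) + \<i> * of_int (round (Im z))"
  have qR: "q \<in> R"
  proof -
    have "R = rational_integers \<Longrightarrow> Im z = 0"
      using assms by (auto simp: z_def R_iff Im_divide)
    then show ?thesis using assms(1) by (auto simp: R_iff q_def)
  qed
  have e1: "\<bar>Re z - Re q\<bar> \<le> 1/2" "\<bar>Im z - Im q\<bar> \<le> 1/2"
    unfolding q_def using of_int_round_abs_le[of "Re z"] of_int_round_abs_le[of "Im z"] by (simp_all add: abs_minus_commute)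
  have "(cmod (z - q))\<^sup>2 = (Re z - Re q)\<^sup>2 + (Im z - Im q)\<^sup>2" by (simp add: cmod_power2)
  also have "\<dots> \<le> (1/2)\<^sup>2 + (1/2)\<^sup>2" using e1
    by (intro add_mono; metis abs_ge_zero power2_abs power_mono)
  finally have "(cmod (z - q))\<^sup>2 < 1\<^sup>2" by (simp add: power2_eq_square)
  then have lt: "cmod (z - q) < 1" using power2_less_imp_less by fastforce
  have "x - q * d = d * (z - q)" using assms(4) by (simp add: z_def field_simps)
  then have "cmod (x - q * d) = cmod d * cmod (z - q)" by (simp add: norm_mult)
  also have "\<dots> < cmod d" using lt assms(4) by simp
  finally show ?thesis using qR that by blast
qed

lemma integral:
  assumes g: "goodR R" and prim: "primitive R v" and vR: "\<And>i. i < dim_vec v \<Longrightarrow> v $ i \<in> R"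
    and nz: "i0 < dim_vec v" "v $ i0 \<noteq> 0"
    and tv: "\<And>i. i < dim_vec v \<Longrightarrow> t * v $ i \<in> R"
  shows "t \<in> R"
proof -
  define P where "P m \<longleftrightarrow> (\<exists>d. d \<in> R \<and> t * d \<in> R \<and> d \<noteq> 0 \<and> Nm d = m)" for m
  have "P (Nm (v $ i0))" unfolding P_def using vR tv nz by blast
  then obtain m where "P m" and mmin: "\<And>m'. P m' \<Longrightarrow> m \<le> m'"
    by (metis LeastI Least_le)
  then obtain d where d: "d \<in> R" "t * d \<in> R" "d \<noteq> 0" "Nm d = m" unfolding P_def by blast
  have "\<exists>q\<in>R. v $ i = d * q" if i: "i < dim_vec v" for i
  proof -
    obtain q where q: "q \<in> R" "cmod (v $ i - q * d) < cmod d"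
      using div_step[OF g vR[OF i] d(1) d(3)] by blast
    define r where "r = v $ i - q * d"
    have rR: "r \<in> R" unfolding r_def using g vR[OF i] q(1) d(1) by (simp add: R_diff R_mult)
    have "t * r = t * v $ i - q * (t * d)" unfolding r_def by (simp add: algebra_simps)
    then have trR: "t * r \<in> R" using g tv[OF i] q(1) d(2) by (simp add: R_diff R_mult)
    have "r = 0"
    proof (rule ccontr)
      assume "r \<noteq> 0"
      then have "P (Nm r)" unfolding P_def using rR trR by blast
      moreover have "Nm r < Nm d" using Nm_less[OF g rR d(1)] q(2) r_def by simp
      ultimately show False using mmin d(4) by fastforce
    qed
    then show ?thesis using q(1) unfolding r_def by (auto simp: mult.commute)
  qed
  then obtain u where u: "u \<in> R" "d * u = 1" using prim d(1) unfolding primitive_def by blast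
  have "t = (t * d) * u" using u(2) by (simp add: mult.assoc)
  then show ?thesis using g d(2) u(1) by (metis R_mult)
qed
lemma cof_expansion:
  assumes B: "B \<in> carrier_mat n n" and n: "0 < n" and v: "dim_vec v = n"
  shows "(\<Sum>i<n. (-1)^i * det (mat_delete B i 0) * v $ i) =
    det (mat n n (\<lambda>(i,j). if j = 0 then v $ i else B $$ (i,j)))"
proof -
  define Bv where "Bv = mat n n (\<lambda>(i,j). if j = 0 then v $ i else B $$ (i,j))"
  have Bv: "Bv \<in> carrier_mat n n" unfolding Bv_def by simp
  have md: "mat_delete Bv i 0 = mat_delete B i 0" if "i < n" for i
    using B that unfolding Bv_def mat_delete_def by (intro eq_matI) auto
  have "det Bv = (\<Sum>i<n. Bv $$ (i,0) * cofactor Bv i 0)"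
    by (rule laplace_expansion_column[OF Bv n])
  also have "\<dots> = (\<Sum>i<n. (-1)^i * det (mat_delete B i 0) * v $ i)"
  proof (intro sum.cong refl)
    fix i assume "i \<in> {..<n}"
    then have i: "i < n" by simp
    have "Bv $$ (i,0) = v $ i" using i n unfolding Bv_def by simp
    then show "Bv $$ (i,0) * cofactor Bv i 0 = (-1)^i * det (mat_delete B i 0) * v $ i"
      unfolding cofactor_def md[OF i] by simp
  qed
  finally show ?thesis unfolding Bv_def by simp
qed

lemma cinner_swap: "dim_vec x = dim_vec y \<Longrightarrow> cinner x y = cnj (cinner y x)"
  unfolding cinner_def by (simp add: mult.commute)

lemma cinner_zero: assumes "cinner w w = 0" shows "w = 0\<^sub>v (dim_vec w)"
proof -
  have "(\<Sum>i<dim_vec w. complex_of_real ((cmod (w $ i))\<^sup>2)) = 0"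
    using assms unfolding cinner_def by (simp add: complex_norm_square mult.commute del: of_real_power)
  then have "(\<Sum>i<dim_vec w. (cmod (w $ i))\<^sup>2) = 0"
    by (metis of_real_eq_0_iff of_real_sum)
  then have "\<forall>i\<in>{..<dim_vec w}. (cmod (w $ i))\<^sup>2 = 0"
    by (subst sum_nonneg_eq_0_iff[symmetric]) auto
  then show ?thesis by (intro eq_vecI) auto
qed
theorem mainTheorem16:
  fixes R :: "complex set" and n k :: nat and lam :: real
    and A0 :: "complex mat" and b :: "nat \<Rightarrow> complex vec"
  assumes hR: "R = rational_integers \<or> R = gaussian_integers"
    and hk: "1 \<le> k" "k < n"
    and hA: "icube R n k lam A0"
    and hprim: "primitive R (col A0 0)"
    and hb: "is_R_basis R n {k..<n} b (orth_lattice R n k A0)"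
  defines "B \<equiv> mat n n (\<lambda>(i, j). if j < k then A0 $$ (i, j) else b j $ i)"
  defines "a \<equiv> vec n (\<lambda>j. cnj ((-1) ^ j * det (mat_delete B j 0)))"
  shows "cnj (det B) / complex_of_real lam \<in> R \<and>
         a = (cnj (det B) / complex_of_real lam) \<cdot>\<^sub>v col A0 0"
proof -
  have g: "goodR R" using hR unfolding goodR_def .
  have lam: "lam > 0" and A0: "A0 \<in> carrier_mat n k"
    and A0R: "\<And>i j. i < n \<Longrightarrow> j < k \<Longrightarrow> A0 $$ (i,j) \<in> R"
    and orth: "\<And>i j. i < k \<Longrightarrow> j < k \<Longrightarrow> cinner (col A0 i) (col A0 j) = (if i = j then complex_of_real lam else 0)"
    using hA unfolding icube_def by auto
  have bL: "\<And>j. k \<le> j \<Longrightarrow> j < n \<Longrightarrow> vec_in R n (b j) \<and> (\<forall>m<k. cinner (col A0 m) (b j) = 0)"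
    using hb unfolding is_R_basis_def orth_lattice_def by auto
  have span: "\<And>w. w \<in> orth_lattice R n k A0 \<Longrightarrow> \<exists>c. (\<forall>j\<in>{k..<n}. c j \<in> R) \<and>
       w = finsum_vec TYPE(complex) n (\<lambda>j. c j \<cdot>\<^sub>v b j) {k..<n}"
    using hb unfolding is_R_basis_def by blast
  have n0: "0 < n" using hk by simp
  have Bc: "B \<in> carrier_mat n n" unfolding B_def by simp
  have BR: "B $$ (i,j) \<in> R" if "i < n" "j < n" for i j
    using that A0R bL[of j] unfolding B_def vec_in_def by auto
  define a1 where "a1 = col A0 0"
  define L where "L = complex_of_real lam"
  have da1: "dim_vec a1 = n" using A0 unfolding a1_def by simp
  have da: "dim_vec a = n" unfolding a_def by simp
  have db: "dim_vec (b j) = n" if "k \<le> j" "j < n" for j using bL[OF that] unfolding vec_in_def by simp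
  have colB: "col B j = (if j < k then col A0 j else b j)" if "j < n" for j
    using that A0 db[of j] unfolding B_def by (intro eq_vecI) auto
  have aR: "a $ i \<in> R" if "i < n" for i
  proof -
    have "det (mat_delete B i 0) \<in> R"
      using Bc that by (intro R_det[OF g]) (auto simp: mat_delete_def intro!: BR)
    then show ?thesis using that g unfolding a_def
      by (simp add: R_cnj R_mult R_pow R_uminus R_1)
  qed
  have key: "cinner a v = det (mat n n (\<lambda>(i,j). if j = 0 then v $ i else B $$ (i,j)))"
    if "dim_vec v = n" for v
    unfolding cof_expansion[OF Bc n0 that, symmetric] cinner_def da
    by (intro sum.cong refl) (simp add: a_def)
  have kcol: "cinner a (col B m) = (if m = 0 then det B else 0)" if m: "m < n" for m
  proof -
    let ?Bv = "mat n n (\<lambda>(i,j). if j = 0 then col B m $ i else B $$ (i,j))"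
    have "cinner a (col B m) = det ?Bv" using key m Bc by simp
    show ?thesis
    proof (cases "m = 0")
      case True
      then have "?Bv = B" using Bc by (intro eq_matI) auto
      then show ?thesis using \<open>cinner a (col B m) = det ?Bv\<close> True by simp
    next
      case False
      have "det ?Bv = 0"
        by (rule det_identical_columns[of _ n 0 m]) (use False m Bc in \<open>auto intro!: eq_vecI\<close>)
      then show ?thesis using \<open>cinner a (col B m) = det ?Bv\<close> False by simp
    qed
  qed
  have ka_a1: "cinner a a1 = det B" using kcol[OF n0] colB[OF n0] hk unfolding a1_def by simp
  have ka_A: "cinner a (col A0 m) = 0" if "0 < m" "m < k" for m
    using kcol[of m] colB[of m] that hk by simp
  have ka_b: "cinner a (b j) = 0" if "k \<le> j" "j < n" for j
    using kcol[of j] colB[of j] that hk by simp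
  define s where "s = cinner a1 a"
  have s: "s = cnj (det B)" unfolding s_def using cinner_swap[of a1 a] da da1 ka_a1 by simp
  have colR: "col A0 m $ i \<in> R" if "m < k" "i < n" for m i using that A0 A0R by simp
  have L_a1: "cinner a1 a1 = L" using orth[of 0 0] hk unfolding a1_def L_def by simp
  have LR: "L \<in> R"
    unfolding L_a1[symmetric] cinner_def da1 a1_def using g hk A0
    by (intro R_sum[OF g] R_mult[OF g] R_cnj[OF g] colR) auto
  have sR: "s \<in> R"
    unfolding s_def cinner_def da1 a1_def using g hk A0
    by (intro R_sum[OF g] R_mult[OF g] R_cnj[OF g] colR aR) auto
  define w where "w = L \<cdot>\<^sub>v a - s \<cdot>\<^sub>v a1"
  have dw: "dim_vec w = n" unfolding w_def using da da1 by simp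
  have wi: "w $ i = L * a $ i - s * a1 $ i" if "i < n" for i
    unfolding w_def using that da da1 by simp
  have cinner_w: "cinner v w = L * cinner v a - s * cinner v a1" if "dim_vec v = n" for v
    unfolding cinner_def that sum_distrib_left sum_subtractf[symmetric]
    by (intro sum.cong refl) (simp add: wi algebra_simps)
  have wL: "w \<in> orth_lattice R n k A0"
    unfolding orth_lattice_def vec_in_def
  proof (intro CollectI conjI allI impI)
    show "dim_vec w = n" by (fact dw)
    fix i assume "i < n"
    then show "w $ i \<in> R" using wi aR LR sR g colR hk unfolding a1_def
      by (simp add: R_diff R_mult)
  next
    fix j assume j: "j < k"
    have dj: "dim_vec (col A0 j) = n" using A0 by simp
    show "cinner (col A0 j) w = 0"
    proof (cases "j = 0")
      case True
      then show ?thesis using cinner_w[OF dj] L_a1 unfolding s_def a1_def by simp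
    next
      case False
      have "cinner (col A0 j) a = 0"
        using cinner_swap[of "col A0 j" a] dj da ka_A[of j] False j by simp
      moreover have "cinner (col A0 j) a1 = 0" using orth[of j 0] j False hk unfolding a1_def by simp
      ultimately show ?thesis using cinner_w[OF dj] by simp
    qed
  qed
  obtain c where c: "w = finsum_vec TYPE(complex) n (\<lambda>j. c j \<cdot>\<^sub>v b j) {k..<n}"
    using span[OF wL] by blast
  have wb: "cinner w (b j) = 0" if "k \<le> j" "j < n" for j
  proof -
    have "cinner w (b j) = cnj (cinner (b j) w)" using cinner_swap[of w "b j"] dw db[OF that] by simp
    also have "cinner (b j) w = L * cinner (b j) a - s * cinner (b j) a1"
      using cinner_w db[OF that] by simp
    also have "cinner (b j) a = 0" using cinner_swap[of "b j" a] db[OF that] da ka_b[OF that] by simp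
    also have "cinner (b j) a1 = 0"
      using cinner_swap[of "b j" a1] db[OF that] da1 bL[OF that] hk unfolding a1_def by simp
    finally show ?thesis by simp
  qed
  have Wi: "w $ i = (\<Sum>j\<in>{k..<n}. c j * b j $ i)" if i: "i < n" for i
  proof -
    have "w $ i = finsum_vec TYPE(complex) n (\<lambda>j. c j \<cdot>\<^sub>v b j) {k..<n} $ i"
      by (subst c) (rule refl)
    also have "\<dots> = (\<Sum>j\<in>{k..<n}. (c j \<cdot>\<^sub>v b j) $ i)"
    proof (rule index_finsum_vec[OF _ i])
      show "(\<lambda>j. c j \<cdot>\<^sub>v b j) \<in> {k..<n} \<rightarrow> carrier_vec n"
      proof (rule Pi_I)
        fix j assume "j \<in> {k..<n}"
        then have "dim_vec (b j) = n" using db by simp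
        then show "c j \<cdot>\<^sub>v b j \<in> carrier_vec n" unfolding carrier_vec_def by simp
      qed
    qed simp
    also have "\<dots> = (\<Sum>j\<in>{k..<n}. c j * b j $ i)"
    proof (rule sum.cong[OF refl])
      fix j assume "j \<in> {k..<n}"
      then have "dim_vec (b j) = n" using db by simp
      then show "(c j \<cdot>\<^sub>v b j) $ i = c j * b j $ i" using i by simp
    qed
    finally show ?thesis .
  qed
  have "cinner w w = (\<Sum>i<n. cnj (w $ i) * (\<Sum>j\<in>{k..<n}. c j * b j $ i))"
    unfolding cinner_def dw by (intro sum.cong refl) (simp add: Wi)
  also have "\<dots> = (\<Sum>j\<in>{k..<n}. c j * cinner w (b j))"
    unfolding cinner_def dw sum_distrib_left
    using db by (subst sum.swap) (auto intro!: sum.cong simp: algebra_simps)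
  also have "\<dots> = 0" using wb by simp
  finally have "w = 0\<^sub>v n" using cinner_zero dw by metis
  then have aeq: "L * a $ i = s * a1 $ i" if "i < n" for i
    using wi[OF that] that by (metis index_zero_vec(1) right_minus_eq)
  have L0: "L \<noteq> 0" using lam unfolding L_def by simp
  have aeq2: "a = (s / L) \<cdot>\<^sub>v a1"
    using aeq L0 da da1 by (intro eq_vecI) (auto simp: field_simps)
  have a1nz: "\<exists>i<n. a1 $ i \<noteq> 0"
  proof (rule ccontr)
    assume "\<not> ?thesis"
    then have "cinner a1 a1 = 0" unfolding cinner_def da1 by simp
    then show False using L_a1 L0 by simp
  qed
  then obtain i0 where i0: "i0 < n" "a1 $ i0 \<noteq> 0" by blast
  have "s / L \<in> R"
  proof (rule integral[OF g hprim[folded a1_def] _ _ i0(2)])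
    show "i0 < dim_vec a1" using i0 da1 by simp
    fix i assume "i < dim_vec a1"
    then show "a1 $ i \<in> R" using colR[of 0 i] hk da1 unfolding a1_def by simp
    show "s / L * a1 $ i \<in> R" using aR aeq2 da1 \<open>i < dim_vec a1\<close>
      by (metis index_smult_vec(1))
  qed
  then show ?thesis using aeq2 s unfolding L_def a1_def by simp
qed
end
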